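(* Let $s\ge1$, $n\ge1$ be integers and $J>0$. The ground space of $H=H_n^s+H_n^J$ is the span of the product states $\{|{\bf t}\rangle:{\bf t}\in T_n\}$ (each of which is the uniform superposition over its own equivalence class, a singleton), and it has dimension $|T_n|$.
   Context: Let $\Sigma=\{-s,\dots,s\}$, $\Sigma_*=\Sigma\setminus\{0\}$. The spin chain on $n$ sites has local space $\mathbb{C}^{2s+1}$ with basis $\{|j\rangle:j\in\Sigma\}$ and $|{\bf t}\rangle=|t_1\rangle\otimes\cdots\otimes|t_n\rangle$. For $m\in\Sigma_*$, $P^m=|\phi_m\rangle\langle\phi_m|$ with $|\phi_m\rangle=\frac1{\sqrt2}(|0,m\rangle-|m,0\rangle)$; for $m\in\{1,\dots,s\}$, $Q^m=|\chi_m\rangle\langle\chi_m|$ with $|\chi_m\rangle=\frac1{\sqrt2}(|0,0\rangle-|m,-m\rangle)$, acting on two neighboring spins. $H_n^s=\sum_{k=1}^{n-1}\big(\sum_{m\in\Sigma_*}P^m_{k,k+1}+\sum_{m=1}^sQ^m_{k,k+1}\big)$ and $H_n^J=J\sum_{k=1}^n(|0\rangle\langle0|)_k$. $T_n\subseteq\Sigma_*^n$ is the set of strings $t_1\cdots t_n$ with no index $j$ such that $t_j=m\in\{1,\dots,s\}$ and $t_{j+1}=-m$. Equivalence of strings in $\Sigma^n$ is generated by the local moves $(0,m)\leftrightarrow(m,0)$ for $m\in\Sigma_*$ and $(0,0)\leftrightarrow(m,-m)$ for $m\in\{1,\dots,s\}$ on adjacent positions. *)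

theory Defs
  imports Complex_Main "HOL-Library.Function_Algebras"
begin

(* Spin values Sigma = {-s..s}, Sigma_* = Sigma - {0}.  Strings t_1..t_n are lists of length n,
   position k (1-based in the paper) is index k-1 here. *)
definition Sig :: "nat \<Rightarrow> int set" where
  "Sig s = {- int s .. int s}"

definition Sig_star :: "nat \<Rightarrow> int set" where
  "Sig_star s = Sig s - {0}"

definition configs :: "nat \<Rightarrow> nat \<Rightarrow> int list set" where
  "configs n s = {t. length t = n \<and> set t \<subseteq> Sig s}"

definition Tn :: "nat \<Rightarrow> nat \<Rightarrow> int list set" where
  "Tn n s = {t. length t = n \<and> set t \<subseteq> Sig_star s \<and>
      \<not> (\<exists>j. j + 1 < n \<and> t ! j \<in> {1 .. int s} \<and> t ! (j+1) = - (t ! j))}"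

(* Hilbert space (C^{2s+1})^{\<otimes> n}: functions on configurations, zero outside *)
definition hspace :: "nat \<Rightarrow> nat \<Rightarrow> (int list \<Rightarrow> complex) set" where
  "hspace n s = {\<psi>. \<forall>t. t \<notin> configs n s \<longrightarrow> \<psi> t = 0}"

definition ket :: "int list \<Rightarrow> (int list \<Rightarrow> complex)" where
  "ket t = (\<lambda>u. if u = t then 1 else 0)"

(* two-site amplitudes: phi_m(a,b) = <a,b|phi_m>, chi_m(a,b) = <a,b|chi_m> *)
definition phi :: "int \<Rightarrow> int \<Rightarrow> int \<Rightarrow> complex" where
  "phi m a b = (of_bool (a = 0 \<and> b = m) - of_bool (a = m \<and> b = 0)) / sqrt 2"

definition chi :: "int \<Rightarrow> int \<Rightarrow> int \<Rightarrow> complex" where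
  "chi m a b = (of_bool (a = 0 \<and> b = 0) - of_bool (a = m \<and> b = - m)) / sqrt 2"

(* matrix element <a,b| (sum_m P^m + sum_m Q^m) |c,d> of the local two-site term *)
definition hloc :: "nat \<Rightarrow> int \<Rightarrow> int \<Rightarrow> int \<Rightarrow> int \<Rightarrow> complex" where
  "hloc s a b c d =
     (\<Sum>m\<in>Sig_star s. phi m a b * cnj (phi m c d)) +
     (\<Sum>m\<in>{1 .. int s}. chi m a b * cnj (chi m c d))"

definition Hmat :: "nat \<Rightarrow> nat \<Rightarrow> real \<Rightarrow> int list \<Rightarrow> int list \<Rightarrow> complex" where
  "Hmat n s J t u =
     (\<Sum>k\<in>{0..<n-1}.
        of_bool (\<forall>j<n. j \<noteq> k \<and> j \<noteq> k+1 \<longrightarrow> t ! j = u ! j) *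
        hloc s (t ! k) (t ! (k+1)) (u ! k) (u ! (k+1)))
   + of_bool (t = u) * of_real J * of_nat (card {k. k < n \<and> t ! k = 0})"

definition Hop :: "nat \<Rightarrow> nat \<Rightarrow> real \<Rightarrow> (int list \<Rightarrow> complex) \<Rightarrow> (int list \<Rightarrow> complex)" where
  "Hop n s J \<psi> = (\<lambda>t. if t \<in> configs n s then (\<Sum>u\<in>configs n s. Hmat n s J t u * \<psi> u) else 0)"

definition eigenvalues :: "nat \<Rightarrow> nat \<Rightarrow> real \<Rightarrow> real set" where
  "eigenvalues n s J = {e. \<exists>\<psi>\<in>hspace n s. \<psi> \<noteq> 0 \<and> Hop n s J \<psi> = (\<lambda>t. of_real e * \<psi> t)}"

definition ground_energy :: "nat \<Rightarrow> nat \<Rightarrow> real \<Rightarrow> real" where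
  "ground_energy n s J = Min (eigenvalues n s J)"

definition ground_space :: "nat \<Rightarrow> nat \<Rightarrow> real \<Rightarrow> (int list \<Rightarrow> complex) set" where
  "ground_space n s J = {\<psi>\<in>hspace n s.
      Hop n s J \<psi> = (\<lambda>t. of_real (ground_energy n s J) * \<psi> t)}"

definition cscale :: "complex \<Rightarrow> (int list \<Rightarrow> complex) \<Rightarrow> (int list \<Rightarrow> complex)" where
  "cscale c \<psi> = (\<lambda>t. c * \<psi> t)"

definition local_move :: "nat \<Rightarrow> int list \<Rightarrow> int list \<Rightarrow> bool" where
  "local_move s t u \<longleftrightarrow> length t = length u \<and>
     (\<exists>k. k + 1 < length t \<and> (\<forall>j<length t. j \<noteq> k \<and> j \<noteq> k+1 \<longrightarrow> t ! j = u ! j) \<and>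
        ((\<exists>m\<in>Sig_star s. (t!k = 0 \<and> t!(k+1) = m \<and> u!k = m \<and> u!(k+1) = 0)
                         \<or> (t!k = m \<and> t!(k+1) = 0 \<and> u!k = 0 \<and> u!(k+1) = m))
       \<or> (\<exists>m\<in>{1 .. int s}. (t!k = 0 \<and> t!(k+1) = 0 \<and> u!k = m \<and> u!(k+1) = - m)
                         \<or> (t!k = m \<and> t!(k+1) = - m \<and> u!k = 0 \<and> u!(k+1) = 0))))"

definition equiv_strings :: "nat \<Rightarrow> int list \<Rightarrow> int list \<Rightarrow> bool" where
  "equiv_strings s = (local_move s)\<^sup>*\<^sup>*"

definition equiv_class :: "nat \<Rightarrow> nat \<Rightarrow> int list \<Rightarrow> int list set" where
  "equiv_class n s t = {u \<in> configs n s. equiv_strings s t u}"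

definition class_state :: "nat \<Rightarrow> nat \<Rightarrow> int list \<Rightarrow> (int list \<Rightarrow> complex)" where
  "class_state n s t = (\<lambda>u. if u \<in> equiv_class n s t then 1 / sqrt (real (card (equiv_class n s t))) else 0)"

end

theory Submission
  imports Defs
begin


lemma fsum_apply: "(sum f A) x = (\<Sum>a\<in>A. f a x)"
  by (induct A rule: infinite_finite_induct) auto

lemma vs_cscale: "vector_space cscale"
  by unfold_locales (auto simp: cscale_def fun_eq_iff algebra_simps)

lemma finite_Sig: "finite (Sig s)" by (simp add: Sig_def)

lemma finite_configs: "finite (configs n s)"
proof -
  have "configs n s = {xs. set xs \<subseteq> Sig s \<and> length xs = n}" by (auto simp: configs_def)
  then show ?thesis using finite_lists_length_eq[OF finite_Sig] by simp
qed

lemma Tn_configs: "Tn n s \<subseteq> configs n s"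
  by (auto simp: Tn_def configs_def Sig_star_def)

lemma Tn_nonzero: "t \<in> Tn n s \<Longrightarrow> k < n \<Longrightarrow> t ! k \<noteq> 0"
  unfolding Tn_def Sig_star_def by (auto dest!: nth_mem)

lemma Tn_nopair: "t \<in> Tn n s \<Longrightarrow> k + 1 < n \<Longrightarrow> t ! k \<in> {1 .. int s} \<Longrightarrow> t ! (k+1) \<noteq> - (t ! k)"
  unfolding Tn_def by auto

lemma hloc_zero:
  assumes "c \<noteq> 0" "d \<noteq> 0" "\<not> (c \<in> {1 .. int s} \<and> d = - c)"
  shows "hloc s a b c d = 0"
proof -
  have "phi m c d = 0" for m using assms by (simp add: phi_def)
  moreover have "chi m c d = 0" if "m \<in> {1 .. int s}" for m using assms that by (auto simp: chi_def)
  ultimately show ?thesis by (simp add: hloc_def)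
qed

lemma Hmat_Tn:
  assumes "u \<in> Tn n s"
  shows "Hmat n s J t u = 0"
proof -
  have len: "length u = n" using assms by (simp add: Tn_def)
  have "hloc s (t ! k) (t ! (k+1)) (u ! k) (u ! (k+1)) = 0" if "k \<in> {0..<n-1}" for k
    using that Tn_nonzero[OF assms] Tn_nopair[OF assms, of k] by (intro hloc_zero) auto
  moreover have "t = u \<Longrightarrow> {k. k < n \<and> t ! k = 0} = {}" using Tn_nonzero[OF assms] by auto
  ultimately show ?thesis unfolding Hmat_def by simp
qed

lemma Hop_zero_on_Tn:
  assumes "\<And>t. t \<notin> Tn n s \<Longrightarrow> \<psi> t = 0"
  shows "Hop n s J \<psi> = 0"
proof -
  have "(\<Sum>u\<in>configs n s. Hmat n s J t u * \<psi> u) = 0" for t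
    by (rule sum.neutral) (metis Hmat_Tn assms mult_zero_left mult_zero_right)
  then show ?thesis by (simp add: Hop_def fun_eq_iff)
qed

lemma no_move:
  assumes a: "t \<in> Tn n s" shows "\<not> local_move s t u"
proof
  assume "local_move s t u"
  then obtain k where k: "k + 1 < length t" and D:
    "(\<exists>m\<in>Sig_star s. (t!k = 0 \<and> t!(k+1) = m \<and> u!k = m \<and> u!(k+1) = 0)
                         \<or> (t!k = m \<and> t!(k+1) = 0 \<and> u!k = 0 \<and> u!(k+1) = m))
       \<or> (\<exists>m\<in>{1 .. int s}. (t!k = 0 \<and> t!(k+1) = 0 \<and> u!k = m \<and> u!(k+1) = - m)
                         \<or> (t!k = m \<and> t!(k+1) = - m \<and> u!k = 0 \<and> u!(k+1) = 0))"
    unfolding local_move_def by blast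
  have len: "length t = n" using a by (simp add: Tn_def)
  have z1: "t ! k \<noteq> 0" using Tn_nonzero[OF a, of k] k len by simp
  have z2: "t ! (k+1) \<noteq> 0" using Tn_nonzero[OF a, of "k+1"] k len by simp
  have np: "t ! k \<in> {1 .. int s} \<Longrightarrow> t ! (k+1) \<noteq> - (t ! k)" using Tn_nopair[OF a, of k] k len by simp
  show False using D z1 z2 np by blast
qed

lemma equiv_Tn: "t \<in> Tn n s \<Longrightarrow> equiv_strings s t u \<longleftrightarrow> u = t"
  unfolding equiv_strings_def
  by (metis converse_rtranclpE no_move rtranclp.rtrancl_refl)

lemma class_Tn: "t \<in> Tn n s \<Longrightarrow> equiv_class n s t = {t} \<and> class_state n s t = ket t"
proof -
  assume a: "t \<in> Tn n s"
  then have c: "equiv_class n s t = {t}"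
    using equiv_Tn[OF a] Tn_configs by (auto simp: equiv_class_def)
  then show ?thesis by (auto simp: class_state_def ket_def fun_eq_iff)
qed



definition zz :: "nat \<Rightarrow> int list \<Rightarrow> int list" where
  "zz k t = t[k := 0, Suc k := 0]"

fun AA :: "nat \<times> int list \<times> int \<Rightarrow> int list \<Rightarrow> complex" where
  "AA (k, r, m) t = of_bool (zz k t = r) * phi m (t ! k) (t ! (k+1))"

fun BB :: "nat \<times> int list \<times> int \<Rightarrow> int list \<Rightarrow> complex" where
  "BB (k, r, m) t = of_bool (zz k t = r) * chi m (t ! k) (t ! (k+1))"

lemma zz_configs: assumes "t \<in> configs n s" shows "zz k t \<in> configs n s"
proof -
  have "set (zz k t) \<subseteq> insert 0 (set t)"
    unfolding zz_def using set_update_subset_insert[of "t[k:=0]" "Suc k" 0] set_update_subset_insert[of t k 0] by auto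
  then show ?thesis using assms by (auto simp: configs_def Sig_def zz_def)
qed

lemma agree_zz:
  assumes "length t = n" "length u = n" "k + 1 < n"
  shows "(\<forall>j<n. j \<noteq> k \<and> j \<noteq> k+1 \<longrightarrow> t ! j = u ! j) \<longleftrightarrow> zz k u = zz k t"
proof
  assume h: "\<forall>j<n. j \<noteq> k \<and> j \<noteq> k+1 \<longrightarrow> t ! j = u ! j"
  show "zz k u = zz k t"
    by (rule nth_equalityI) (use assms h in \<open>auto simp: zz_def nth_list_update\<close>)
next
  assume h: "zz k u = zz k t"
  show "\<forall>j<n. j \<noteq> k \<and> j \<noteq> k+1 \<longrightarrow> t ! j = u ! j"
  proof (intro allI impI)
    fix j assume j: "j < n" "j \<noteq> k \<and> j \<noteq> k + 1"
    have "zz k u ! j = zz k t ! j" using h by simp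
    then show "t ! j = u ! j" using j assms by (simp add: zz_def nth_list_update)
  qed
qed

lemma per_k:
  assumes t: "t \<in> configs n s" and u: "u \<in> configs n s" and k: "k + 1 < n"
  shows "of_bool (\<forall>j<n. j \<noteq> k \<and> j \<noteq> k+1 \<longrightarrow> t ! j = u ! j) *
        hloc s (t ! k) (t ! (k+1)) (u ! k) (u ! (k+1))
    = (\<Sum>r\<in>configs n s. (\<Sum>m\<in>Sig_star s. AA (k,r,m) t * cnj (AA (k,r,m) u))
                        + (\<Sum>m\<in>{1..int s}. BB (k,r,m) t * cnj (BB (k,r,m) u)))"
proof -
  have lt: "length t = n" "length u = n" using t u by (auto simp: configs_def)
  have "(\<Sum>r\<in>configs n s. (\<Sum>m\<in>Sig_star s. AA (k,r,m) t * cnj (AA (k,r,m) u))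
                        + (\<Sum>m\<in>{1..int s}. BB (k,r,m) t * cnj (BB (k,r,m) u)))
      = (\<Sum>r\<in>configs n s. if r = zz k t then of_bool (zz k u = r) * hloc s (t ! k) (t ! (k+1)) (u ! k) (u ! (k+1)) else 0)"
    by (rule sum.cong) (auto simp: hloc_def sum_distrib_left)
  also have "\<dots> = of_bool (zz k u = zz k t) * hloc s (t ! k) (t ! (k+1)) (u ! k) (u ! (k+1))"
    using zz_configs[OF t] finite_configs by (simp add: sum.delta')
  finally show ?thesis using agree_zz[OF lt k] by simp
qed

lemma Hmat_decomp:
  assumes t: "t \<in> configs n s" and u: "u \<in> configs n s"
  shows "Hmat n s J t u =
     (\<Sum>i\<in>{0..<n-1} \<times> configs n s \<times> Sig_star s. AA i t * cnj (AA i u))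
   + (\<Sum>i\<in>{0..<n-1} \<times> configs n s \<times> {1..int s}. BB i t * cnj (BB i u))
   + of_bool (t = u) * of_real J * of_nat (card {k. k < n \<and> t ! k = 0})"
proof -
  have "(\<Sum>k\<in>{0..<n-1}.
        of_bool (\<forall>j<n. j \<noteq> k \<and> j \<noteq> k+1 \<longrightarrow> t ! j = u ! j) *
        hloc s (t ! k) (t ! (k+1)) (u ! k) (u ! (k+1)))
     = (\<Sum>k\<in>{0..<n-1}. (\<Sum>r\<in>configs n s. (\<Sum>m\<in>Sig_star s. AA (k,r,m) t * cnj (AA (k,r,m) u))
                        + (\<Sum>m\<in>{1..int s}. BB (k,r,m) t * cnj (BB (k,r,m) u))))"
    by (rule sum.cong[OF refl], rule per_k[OF t u]) auto
  also have "\<dots> = (\<Sum>i\<in>{0..<n-1} \<times> configs n s \<times> Sig_star s. AA i t * cnj (AA i u))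
   + (\<Sum>i\<in>{0..<n-1} \<times> configs n s \<times> {1..int s}. BB i t * cnj (BB i u))"
    by (simp only: sum.distrib sum.cartesian_product) (intro arg_cong2[where f=plus] sum.cong refl; clarsimp)
  finally show ?thesis unfolding Hmat_def by simp
qed



lemma cnj_sq: "cnj z * z = (complex_of_real (cmod z))^2" "z * cnj z = (complex_of_real (cmod z))^2"
  using complex_norm_square[of z] by (simp_all add: mult.commute)

lemma quad:
  assumes "finite C"
  shows "(\<Sum>t\<in>C. cnj (\<psi> t) * (\<Sum>u\<in>C. (\<Sum>i\<in>I. G i t * cnj (G i u)) * \<psi> u))
       = of_real (\<Sum>i\<in>I. (cmod (\<Sum>u\<in>C. cnj (G i u) * \<psi> u))^2)"
proof -
  have e1: "cnj (\<psi> t) * (\<Sum>u\<in>C. (\<Sum>i\<in>I. G i t * cnj (G i u)) * \<psi> u)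
      = (\<Sum>u\<in>C. \<Sum>i\<in>I. (cnj (\<psi> t) * G i t) * (cnj (G i u) * \<psi> u))" for t
  proof -
    have "cnj (\<psi> t) * (\<Sum>u\<in>C. (\<Sum>i\<in>I. G i t * cnj (G i u)) * \<psi> u)
        = (\<Sum>u\<in>C. cnj (\<psi> t) * ((\<Sum>i\<in>I. G i t * cnj (G i u)) * \<psi> u))"
      by (simp only: sum_distrib_left)
    also have "\<dots> = (\<Sum>u\<in>C. \<Sum>i\<in>I. cnj (\<psi> t) * ((G i t * cnj (G i u)) * \<psi> u))"
      by (simp only: sum_distrib_left sum_distrib_right)
    also have "\<dots> = (\<Sum>u\<in>C. \<Sum>i\<in>I. (cnj (\<psi> t) * G i t) * (cnj (G i u) * \<psi> u))"
      by (simp only: mult.assoc)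
    finally show ?thesis .
  qed
  have "(\<Sum>t\<in>C. cnj (\<psi> t) * (\<Sum>u\<in>C. (\<Sum>i\<in>I. G i t * cnj (G i u)) * \<psi> u))
      = (\<Sum>t\<in>C. \<Sum>u\<in>C. \<Sum>i\<in>I. (cnj (\<psi> t) * G i t) * (cnj (G i u) * \<psi> u))"
    by (simp only: e1)
  also have "\<dots> = (\<Sum>t\<in>C. \<Sum>i\<in>I. \<Sum>u\<in>C. (cnj (\<psi> t) * G i t) * (cnj (G i u) * \<psi> u))"
    by (rule sum.cong[OF refl], rule sum.swap)
  also have "\<dots> = (\<Sum>i\<in>I. \<Sum>t\<in>C. \<Sum>u\<in>C. (cnj (\<psi> t) * G i t) * (cnj (G i u) * \<psi> u))"
    by (rule sum.swap)
  also have "\<dots> = (\<Sum>i\<in>I. (\<Sum>t\<in>C. cnj (\<psi> t) * G i t) * (\<Sum>u\<in>C. cnj (G i u) * \<psi> u))"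
    by (simp only: sum_product)
  also have "\<dots> = (\<Sum>i\<in>I. cnj (\<Sum>u\<in>C. cnj (G i u) * \<psi> u) * (\<Sum>u\<in>C. cnj (G i u) * \<psi> u))"
    by (simp only: cnj_sum complex_cnj_mult complex_cnj_cnj mult.commute)
  also have "\<dots> = (\<Sum>i\<in>I. of_real ((cmod (\<Sum>u\<in>C. cnj (G i u) * \<psi> u))^2))"
    by (simp only: cnj_sq of_real_power)
  finally show ?thesis by (simp only: of_real_sum)
qed

definition S1 where "S1 n s \<psi> = (\<Sum>i\<in>{0..<n-1} \<times> configs n s \<times> Sig_star s. (cmod (\<Sum>u\<in>configs n s. cnj (AA i u) * \<psi> u))^2)"
definition S2 where "S2 n s \<psi> = (\<Sum>i\<in>{0..<n-1} \<times> configs n s \<times> {1..int s}. (cmod (\<Sum>u\<in>configs n s. cnj (BB i u) * \<psi> u))^2)"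
definition S3 where "S3 n s \<psi> = (\<Sum>t\<in>configs n s. real (card {k. k < n \<and> t ! k = 0}) * (cmod (\<psi> t))^2)"

lemma Q_form:
  "(\<Sum>t\<in>configs n s. cnj (\<psi> t) * Hop n s J \<psi> t) = of_real (S1 n s \<psi> + S2 n s \<psi> + J * S3 n s \<psi>)"
proof -
  let ?C = "configs n s"
  let ?I1 = "{0..<n-1} \<times> configs n s \<times> Sig_star s"
  let ?I2 = "{0..<n-1} \<times> configs n s \<times> {1..int s}"
  let ?N = "\<lambda>t. card {k. k < n \<and> t ! k = 0}"
  have "(\<Sum>t\<in>?C. cnj (\<psi> t) * Hop n s J \<psi> t)
     = (\<Sum>t\<in>?C. cnj (\<psi> t) * (\<Sum>u\<in>?C. (\<Sum>i\<in>?I1. AA i t * cnj (AA i u)) * \<psi> u))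
     + (\<Sum>t\<in>?C. cnj (\<psi> t) * (\<Sum>u\<in>?C. (\<Sum>i\<in>?I2. BB i t * cnj (BB i u)) * \<psi> u))
     + (\<Sum>t\<in>?C. cnj (\<psi> t) * (\<Sum>u\<in>?C. (of_bool (t = u) * of_real J * of_nat (?N t)) * \<psi> u))"
  proof -
    have "cnj (\<psi> t) * Hop n s J \<psi> t = 
       cnj (\<psi> t) * (\<Sum>u\<in>?C. (\<Sum>i\<in>?I1. AA i t * cnj (AA i u)) * \<psi> u)
     + cnj (\<psi> t) * (\<Sum>u\<in>?C. (\<Sum>i\<in>?I2. BB i t * cnj (BB i u)) * \<psi> u)
     + cnj (\<psi> t) * (\<Sum>u\<in>?C. (of_bool (t = u) * of_real J * of_nat (?N t)) * \<psi> u)" if t: "t \<in> ?C" for t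
    proof -
      have "Hop n s J \<psi> t = (\<Sum>u\<in>?C. (\<Sum>i\<in>?I1. AA i t * cnj (AA i u)) * \<psi> u
         + (\<Sum>i\<in>?I2. BB i t * cnj (BB i u)) * \<psi> u + (of_bool (t = u) * of_real J * of_nat (?N t)) * \<psi> u)"
        unfolding Hop_def using t by (simp add: Hmat_decomp distrib_right cong: sum.cong)
      then show ?thesis by (simp add: sum.distrib distrib_left)
    qed
    then show ?thesis by (simp add: sum.distrib[symmetric] cong: sum.cong)
  qed
  also have "(\<Sum>t\<in>?C. cnj (\<psi> t) * (\<Sum>u\<in>?C. (of_bool (t = u) * of_real J * of_nat (?N t)) * \<psi> u))
      = of_real (J * S3 n s \<psi>)"
  proof -
    have "(\<Sum>t\<in>?C. cnj (\<psi> t) * (\<Sum>u\<in>?C. (of_bool (t = u) * of_real J * of_nat (?N t)) * \<psi> u))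
       = (\<Sum>t\<in>?C. of_real (J * (real (?N t) * (cmod (\<psi> t))^2)))"
    proof (rule sum.cong[OF refl])
      fix t assume "t \<in> ?C"
      then have "(\<Sum>u\<in>?C. (of_bool (t = u) * of_real J * of_nat (?N t)) * \<psi> u) = of_real J * of_nat (?N t) * \<psi> t"
      proof -
        have "(\<Sum>u\<in>?C. (of_bool (t = u) * of_real J * of_nat (?N t)) * \<psi> u)
           = (\<Sum>u\<in>?C. if u = t then of_real J * of_nat (?N t) * \<psi> u else 0)"
          by (rule sum.cong) auto
        also have "\<dots> = of_real J * of_nat (?N t) * \<psi> t"
          using finite_configs \<open>t \<in> ?C\<close> by (simp add: sum.delta)
        finally show ?thesis .
      qed
      then show "cnj (\<psi> t) * (\<Sum>u\<in>?C. (of_bool (t = u) * of_real J * of_nat (?N t)) * \<psi> u)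
          = of_real (J * (real (?N t) * (cmod (\<psi> t))^2))"
        by (simp add: cnj_sq mult_ac)
    qed
    also have "\<dots> = of_real (J * S3 n s \<psi>)" by (simp add: S3_def sum_distrib_left)
    finally show ?thesis .
  qed
  finally have eq: "(\<Sum>t\<in>?C. cnj (\<psi> t) * Hop n s J \<psi> t)
     = (\<Sum>t\<in>?C. cnj (\<psi> t) * (\<Sum>u\<in>?C. (\<Sum>i\<in>?I1. AA i t * cnj (AA i u)) * \<psi> u))
     + (\<Sum>t\<in>?C. cnj (\<psi> t) * (\<Sum>u\<in>?C. (\<Sum>i\<in>?I2. BB i t * cnj (BB i u)) * \<psi> u))
     + of_real (J * S3 n s \<psi>)" .
  have q1: "(\<Sum>t\<in>?C. cnj (\<psi> t) * (\<Sum>u\<in>?C. (\<Sum>i\<in>?I1. AA i t * cnj (AA i u)) * \<psi> u)) = of_real (S1 n s \<psi>)"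
    unfolding S1_def by (rule quad[OF finite_configs])
  have q2: "(\<Sum>t\<in>?C. cnj (\<psi> t) * (\<Sum>u\<in>?C. (\<Sum>i\<in>?I2. BB i t * cnj (BB i u)) * \<psi> u)) = of_real (S2 n s \<psi>)"
    unfolding S2_def by (rule quad[OF finite_configs])
  show ?thesis unfolding eq q1 q2 of_real_add ..
qed



lemma S_nonneg: "S1 n s \<psi> \<ge> 0" "S2 n s \<psi> \<ge> 0" "S3 n s \<psi> \<ge> 0"
  unfolding S1_def S2_def S3_def by (auto intro!: sum_nonneg)

lemma Q_eig:
  assumes "Hop n s J \<psi> = (\<lambda>t. of_real e * \<psi> t)"
  shows "S1 n s \<psi> + S2 n s \<psi> + J * S3 n s \<psi> = e * (\<Sum>t\<in>configs n s. (cmod (\<psi> t))^2)"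
proof -
  have "complex_of_real (S1 n s \<psi> + S2 n s \<psi> + J * S3 n s \<psi>) = (\<Sum>t\<in>configs n s. cnj (\<psi> t) * (of_real e * \<psi> t))"
    using Q_form[where n=n and s=s and \<psi>=\<psi> and J=J] assms by simp
  also have "\<dots> = (\<Sum>t\<in>configs n s. of_real e * (cnj (\<psi> t) * \<psi> t))"
    by (simp only: mult.left_commute)
  also have "\<dots> = of_real (e * (\<Sum>t\<in>configs n s. (cmod (\<psi> t))^2))"
    by (simp add: cnj_sq sum_distrib_left)
  finally show ?thesis by (simp only: of_real_eq_iff)
qed

lemma eig_nonneg:
  assumes J: "J > 0" and h: "\<psi> \<in> hspace n s" and nz: "\<psi> \<noteq> 0"
    and e: "Hop n s J \<psi> = (\<lambda>t. of_real e * \<psi> t)"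
  shows "e \<ge> 0"
proof -
  obtain t0 where t0: "\<psi> t0 \<noteq> 0" using nz by (auto simp: fun_eq_iff)
  then have t0C: "t0 \<in> configs n s" using h by (auto simp: hspace_def)
  have pos: "(\<Sum>t\<in>configs n s. (cmod (\<psi> t))^2) > 0"
  proof -
    have "(cmod (\<psi> t0))^2 \<le> (\<Sum>t\<in>configs n s. (cmod (\<psi> t))^2)"
      using t0C finite_configs by (intro member_le_sum) auto
    moreover have "(cmod (\<psi> t0))^2 > 0" using t0 by simp
    ultimately show ?thesis by linarith
  qed
  have "J * S3 n s \<psi> \<ge> 0" using J S_nonneg(3)[of n s \<psi>] by simp
  then have "e * (\<Sum>t\<in>configs n s. (cmod (\<psi> t))^2) \<ge> 0"
    using Q_eig[OF e] S_nonneg[of n s \<psi>] by linarith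
  then show ?thesis using pos by (simp add: zero_le_mult_iff)
qed

lemma eq_from_zz:
  assumes "length u = length t" "zz j u = zz j t" "u ! j = t ! j" "u ! Suc j = t ! Suc j"
  shows "u = t"
proof (rule nth_equalityI)
  show "length u = length t" by fact
  fix i assume i: "i < length u"
  show "u ! i = t ! i"
  proof (cases "i = j \<or> i = Suc j")
    case True then show ?thesis using assms by auto
  next
    case False
    have "zz j u ! i = zz j t ! i" using assms by simp
    then show ?thesis using False by (simp add: zz_def)
  qed
qed

lemma kernel_supp:
  assumes J: "J > 0" and h: "\<psi> \<in> hspace n s"
    and e: "Hop n s J \<psi> = (\<lambda>t. of_real 0 * \<psi> t)"
    and tn: "t \<notin> Tn n s"
  shows "\<psi> t = 0"
proof -
  let ?C = "configs n s"
  have Q0: "S1 n s \<psi> + S2 n s \<psi> + J * S3 n s \<psi> = 0" using Q_eig[OF e] by simp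
  have "J * S3 n s \<psi> \<ge> 0" using J S_nonneg(3)[of n s \<psi>] by simp
  then have "S2 n s \<psi> = 0" "J * S3 n s \<psi> = 0" using S_nonneg[of n s \<psi>] Q0 by linarith+
  then have "S2 n s \<psi> = 0" "S3 n s \<psi> = 0" using J by auto
  then have S2_0: "S2 n s \<psi> = 0" and S3_0: "S3 n s \<psi> = 0" by auto
  have fI2: "finite ({0..<n-1} \<times> ?C \<times> {1..int s})" using finite_configs by simp
  define g where "g = (\<lambda>i. (cmod (\<Sum>u\<in>?C. cnj (BB i u) * \<psi> u))^2)"
  have "sum g ({0..<n-1} \<times> ?C \<times> {1..int s}) = 0" using S2_0 unfolding S2_def g_def .
  then have g0: "\<forall>i\<in>{0..<n-1} \<times> ?C \<times> {1..int s}. g i = 0"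
    using sum_nonneg_eq_0_iff[OF fI2, of g] unfolding g_def by (meson zero_le_power2)
  have S2z: "\<forall>i\<in>{0..<n-1} \<times> ?C \<times> {1..int s}. (\<Sum>u\<in>?C. cnj (BB i u) * \<psi> u) = 0"
    using g0 unfolding g_def by simp
  define h where "h = (\<lambda>t. real (card {k. k < n \<and> t ! k = 0}) * (cmod (\<psi> t))^2)"
  have fC: "finite ?C" by (rule finite_configs)
  have "sum h ?C = 0" using S3_0 unfolding S3_def h_def .
  then have S3z: "\<forall>t\<in>?C. h t = 0"
    using sum_nonneg_eq_0_iff[OF fC, of h] unfolding h_def by (meson zero_le_power2 of_nat_0_le_iff mult_nonneg_nonneg)
  have zero_case: "\<psi> u = 0" if u: "u \<in> ?C" and k: "k < n" "u ! k = 0" for u k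
  proof -
    have "card {k. k < n \<and> u ! k = 0} > 0"
      using k by (subst card_gt_0_iff) auto
    then show ?thesis using S3z u k unfolding h_def by auto
  qed
  show ?thesis
  proof (cases "t \<in> ?C")
    case False then show ?thesis using h by (auto simp: hspace_def)
  next
    case tC: True
    then have lt: "length t = n" and st: "set t \<subseteq> Sig s" by (auto simp: configs_def)
    show ?thesis
    proof (cases "\<exists>k<n. t ! k = 0")
      case True then show ?thesis using zero_case tC by blast
    next
      case False
      then have "set t \<subseteq> Sig_star s" using st lt by (auto simp: Sig_star_def in_set_conv_nth)
      then obtain j where j: "j + 1 < n" "t ! j \<in> {1 .. int s}" "t ! (j+1) = - (t ! j)"
        using tn lt by (auto simp: Tn_def)
      define m where "m = t ! j"
      define r where "r = zz j t"
      have rC: "r \<in> ?C" unfolding r_def by (rule zz_configs[OF tC])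
      have lr: "length r = n" using lt by (simp add: r_def zz_def)
      have rj: "r ! j = 0" "r ! Suc j = 0" using j lt by (auto simp: r_def zz_def nth_list_update)
      have pr: "\<psi> r = 0" using zero_case[OF rC, of j] rj j by simp
      have m1: "m \<ge> 1" using j by (simp add: m_def)
      have rt: "r \<noteq> t" using rj m1 by (auto simp: m_def)
      have iI: "(j, r, m) \<in> {0..<n-1} \<times> ?C \<times> {1..int s}" using j rC by (auto simp: m_def)
      let ?f = "\<lambda>u. cnj (BB (j, r, m) u) * \<psi> u"
      have "(\<Sum>u\<in>?C. ?f u) = (\<Sum>u\<in>{r, t}. ?f u)"
      proof (rule sum.mono_neutral_right[OF finite_configs])
        show "{r, t} \<subseteq> ?C" using rC tC by auto
        show "\<forall>u\<in>?C - {r, t}. ?f u = 0"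
        proof
          fix u assume u: "u \<in> ?C - {r, t}"
          then have lu: "length u = n" by (auto simp: configs_def)
          show "?f u = 0"
          proof (cases "zz j u = r")
            case False then show ?thesis by simp
          next
            case zu: True
            have zr: "zz j r = r" unfolding r_def zz_def
              using j lt by (intro nth_equalityI) (auto simp: nth_list_update)
            have "\<not> (u ! j = 0 \<and> u ! Suc j = 0)"
            proof
              assume "u ! j = 0 \<and> u ! Suc j = 0"
              then have "u = r" using eq_from_zz[of u r j] zu zr rj lu lr by simp
              then show False using u by simp
            qed
            moreover have "\<not> (u ! j = m \<and> u ! Suc j = - m)"
            proof
              assume "u ! j = m \<and> u ! Suc j = - m"
              then have "u = t" using eq_from_zz[of u t j] zu j lu lt by (simp add: m_def r_def)
              then show False using u by simp
            qed
            ultimately show ?thesis by (auto simp: chi_def)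
          qed
        qed
      qed
      also have "\<dots> = ?f r + ?f t" using rt by simp
      also have "?f r = 0" using pr by simp
      also have "?f t = - \<psi> t / sqrt 2" using j m1
        by (simp add: r_def m_def chi_def)
      finally have "(\<Sum>u\<in>?C. ?f u) = - \<psi> t / sqrt 2" by simp
      moreover have "(\<Sum>u\<in>?C. ?f u) = 0" using S2z iI by simp
      ultimately show ?thesis by simp
    qed
  qed
qed



interpretation V: vector_space cscale by (rule vs_cscale)

lemma Hop_at: "t \<in> configs n s \<Longrightarrow> Hop n s J \<psi> t = (\<Sum>u\<in>configs n s. Hmat n s J t u * \<psi> u)"
  by (simp add: Hop_def)

lemma eig_indep:
  assumes fin: "finite F"
    and eig: "\<forall>e\<in>F. \<psi> e \<in> hspace n s \<and> \<psi> e \<noteq> 0 \<and> Hop n s J (\<psi> e) = (\<lambda>t. of_real e * \<psi> e t)"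
    and s0: "\<forall>t. (\<Sum>e\<in>F. c e * \<psi> e t) = 0"
  shows "\<forall>e\<in>F. c e = 0"
  using fin eig s0
proof (induction F arbitrary: c rule: finite_induct)
  case empty then show ?case by simp
next
  case (insert a F)
  let ?C = "configs n s"
  have s1: "(\<Sum>e\<in>insert a F. c e * (of_real e * \<psi> e t)) = 0" if t: "t \<in> ?C" for t
  proof -
    have "(\<Sum>e\<in>insert a F. c e * (of_real e * \<psi> e t)) = (\<Sum>e\<in>insert a F. c e * Hop n s J (\<psi> e) t)"
      using insert.prems(1) by (intro sum.cong refl) (metis insertI1 insertI2 insert_iff)
    also have "\<dots> = (\<Sum>e\<in>insert a F. \<Sum>u\<in>?C. c e * (Hmat n s J t u * \<psi> e u))"
      using t by (simp add: Hop_at sum_distrib_left)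
    also have "\<dots> = (\<Sum>u\<in>?C. Hmat n s J t u * (\<Sum>e\<in>insert a F. c e * \<psi> e u))"
      by (subst sum.swap) (simp add: sum_distrib_left mult_ac)
    also have "\<dots> = 0" using insert.prems(2) by simp
    finally show ?thesis .
  qed
  have s2: "\<forall>t. (\<Sum>e\<in>F. (c e * (of_real e - of_real a)) * \<psi> e t) = 0"
  proof
    fix t
    show "(\<Sum>e\<in>F. (c e * (of_real e - of_real a)) * \<psi> e t) = 0"
    proof (cases "t \<in> ?C")
      case True
      have "(\<Sum>e\<in>F. (c e * (of_real e - of_real a)) * \<psi> e t)
          = (\<Sum>e\<in>insert a F. (c e * (of_real e - of_real a)) * \<psi> e t)"
        using insert.hyps by simp
      also have "\<dots> = (\<Sum>e\<in>insert a F. c e * (of_real e * \<psi> e t)) - of_real a * (\<Sum>e\<in>insert a F. c e * \<psi> e t)"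
        by (simp add: sum_distrib_left sum_subtractf[symmetric] algebra_simps)
      also have "\<dots> = 0" using s1[OF True] insert.prems(2) by simp
      finally show ?thesis .
    next
      case False
      then have "\<forall>e\<in>F. \<psi> e t = 0" using insert.prems(1) by (auto simp: hspace_def)
      then show ?thesis by simp
    qed
  qed
  have "\<forall>e\<in>F. c e * (of_real e - of_real a) = 0"
    by (rule insert.IH[of "\<lambda>e. c e * (of_real e - of_real a)"]) (use insert.prems s2 in auto)
  then have cF: "\<forall>e\<in>F. c e = 0" using insert.hyps by auto
  then have "\<forall>t. c a * \<psi> a t = 0" using insert.prems(2) insert.hyps by simp
  moreover obtain t0 where "\<psi> a t0 \<noteq> 0" using insert.prems(1) by (auto simp: fun_eq_iff)
  ultimately have "c a = 0" by auto
  with cF show ?case by simp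
qed

lemma hspace_span: "\<phi> \<in> hspace n s \<Longrightarrow> \<phi> \<in> V.span (ket ` configs n s)"
proof -
  assume h: "\<phi> \<in> hspace n s"
  have "\<phi> = (\<Sum>t\<in>configs n s. cscale (\<phi> t) (ket t))"
  proof
    fix u
    have "(\<Sum>t\<in>configs n s. cscale (\<phi> t) (ket t)) u = (\<Sum>t\<in>configs n s. if t = u then \<phi> u else 0)"
      by (simp add: fsum_apply cscale_def ket_def) (rule sum.cong, auto)
    also have "\<dots> = \<phi> u" using h finite_configs by (simp add: sum.delta' hspace_def)
    finally show "\<phi> u = (\<Sum>t\<in>configs n s. cscale (\<phi> t) (ket t)) u" by simp
  qed
  also have "\<dots> \<in> V.span (ket ` configs n s)"
    by (intro V.span_sum V.span_scale V.span_base) auto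
  finally show ?thesis .
qed



lemma eig_card_bound:
  assumes fin: "finite E'" and sub: "E' \<subseteq> eigenvalues n s J"
  shows "card E' \<le> card (configs n s)"
proof -
  define P where "P = (\<lambda>e \<psi>. \<psi> \<in> hspace n s \<and> \<psi> \<noteq> 0 \<and> Hop n s J \<psi> = (\<lambda>t. of_real e * \<psi> t))"
  define \<psi> where "\<psi> = (\<lambda>e. SOME \<phi>. P e \<phi>)"
  have P\<psi>: "P e (\<psi> e)" if "e \<in> E'" for e
  proof -
    have "\<exists>\<phi>. P e \<phi>" using sub that by (auto simp: eigenvalues_def P_def)
    then show ?thesis unfolding \<psi>_def by (rule someI_ex)
  qed
  have inj: "inj_on \<psi> E'"
  proof
    fix x y assume x: "x \<in> E'" and y: "y \<in> E'" and eq: "\<psi> x = \<psi> y"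
    obtain t where t: "\<psi> x t \<noteq> 0" using P\<psi>[OF x] by (auto simp: P_def fun_eq_iff)
    have "of_real x * \<psi> x t = Hop n s J (\<psi> x) t" using P\<psi>[OF x] by (simp add: P_def)
    also have "\<dots> = of_real y * \<psi> x t" using P\<psi>[OF y] eq by (simp add: P_def)
    finally show "x = y" using t by simp
  qed
  have ind: "V.independent (\<psi> ` E')"
  proof (rule V.independent_if_scalars_zero)
    show "finite (\<psi> ` E')" using fin by simp
    fix f x assume s0: "(\<Sum>x\<in>\<psi> ` E'. cscale (f x) x) = 0" and x: "x \<in> \<psi> ` E'"
    have "(\<Sum>e\<in>E'. cscale (f (\<psi> e)) (\<psi> e)) = 0" using s0 by (simp add: sum.reindex[OF inj])
    then have "\<forall>t. (\<Sum>e\<in>E'. f (\<psi> e) * \<psi> e t) = 0"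
      by (simp add: fun_eq_iff fsum_apply cscale_def)
    then have "\<forall>e\<in>E'. f (\<psi> e) = 0"
      by (intro eig_indep[OF fin]) (use P\<psi> in \<open>auto simp: P_def\<close>)
    then show "f x = 0" using x by auto
  qed
  have "\<psi> ` E' \<subseteq> V.span (ket ` configs n s)"
    using P\<psi> hspace_span by (auto simp: P_def)
  then have "card (\<psi> ` E') \<le> card (ket ` configs n s)"
    using V.independent_span_bound[OF _ ind] finite_configs by blast
  also have "\<dots> \<le> card (configs n s)" using finite_configs by (rule card_image_le)
  finally show ?thesis using card_image[OF inj] by simp
qed

lemma eig_finite: "finite (eigenvalues n s J)"
proof (rule ccontr)
  assume "infinite (eigenvalues n s J)"
  then obtain E' where "finite E'" "card E' = Suc (card (configs n s))" "E' \<subseteq> eigenvalues n s J"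
    using infinite_arbitrarily_large by blast
  then show False using eig_card_bound by fastforce
qed

lemma t0_Tn: "s \<ge> 1 \<Longrightarrow> replicate n 1 \<in> Tn n s"
  by (auto simp: Tn_def Sig_star_def Sig_def)

lemma ket_Tn_eig: "t \<in> Tn n s \<Longrightarrow> ket t \<in> hspace n s \<and> ket t \<noteq> 0 \<and> Hop n s J (ket t) = (\<lambda>u. of_real 0 * ket t u)"
proof -
  assume t: "t \<in> Tn n s"
  have "Hop n s J (ket t) = 0" by (rule Hop_zero_on_Tn) (use t in \<open>auto simp: ket_def\<close>)
  moreover have "ket t \<in> hspace n s" using t Tn_configs by (auto simp: hspace_def ket_def)
  moreover have "ket t \<noteq> 0" by (auto simp: ket_def fun_eq_iff)
  ultimately show ?thesis by (simp add: fun_eq_iff)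
qed

lemma ground_energy_0:
  assumes "s \<ge> 1" "J > 0"
  shows "ground_energy n s J = 0"
  unfolding ground_energy_def
proof (rule Min_eqI[OF eig_finite])
  show "0 \<in> eigenvalues n s J"
    using ket_Tn_eig[OF t0_Tn[OF assms(1)]] unfolding eigenvalues_def by blast
  fix y assume "y \<in> eigenvalues n s J"
  then show "0 \<le> y" using eig_nonneg[OF assms(2)] unfolding eigenvalues_def by blast
qed



lemma ground_eq_W:
  assumes "s \<ge> 1" "J > 0"
  shows "ground_space n s J = {\<psi> :: int list \<Rightarrow> complex. \<forall>t. t \<notin> Tn n s \<longrightarrow> \<psi> t = 0}"
proof
  show "ground_space n s J \<subseteq> {\<psi> :: int list \<Rightarrow> complex. \<forall>t. t \<notin> Tn n s \<longrightarrow> \<psi> t = 0}"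
    using kernel_supp[OF assms(2)] ground_energy_0[OF assms] by (auto simp: ground_space_def)
next
  show "{\<psi> :: int list \<Rightarrow> complex. \<forall>t. t \<notin> Tn n s \<longrightarrow> \<psi> t = 0} \<subseteq> ground_space n s J"
  proof
    fix \<psi> assume "\<psi> \<in> {\<psi> :: int list \<Rightarrow> complex. \<forall>t. t \<notin> Tn n s \<longrightarrow> \<psi> t = 0}"
    then have w: "\<And>t. t \<notin> Tn n s \<Longrightarrow> \<psi> t = 0" by simp
    have "Hop n s J \<psi> = 0" by (rule Hop_zero_on_Tn) (use w in auto)
    moreover have "\<psi> \<in> hspace n s" using w Tn_configs by (auto simp: hspace_def)
    ultimately show "\<psi> \<in> ground_space n s J"
      using ground_energy_0[OF assms] by (simp add: ground_space_def fun_eq_iff)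
  qed
qed

lemma finite_Tn: "finite (Tn n s)" using finite_subset[OF Tn_configs finite_configs] .

lemma W_span: "{\<psi> :: int list \<Rightarrow> complex. \<forall>t. t \<notin> Tn n s \<longrightarrow> \<psi> t = 0} = V.span (ket ` Tn n s)"
proof
  show "{\<psi> :: int list \<Rightarrow> complex. \<forall>t. t \<notin> Tn n s \<longrightarrow> \<psi> t = 0} \<subseteq> V.span (ket ` Tn n s)"
  proof
    fix \<phi> assume "\<phi> \<in> {\<psi> :: int list \<Rightarrow> complex. \<forall>t. t \<notin> Tn n s \<longrightarrow> \<psi> t = 0}"
    then have h: "\<And>t. t \<notin> Tn n s \<Longrightarrow> \<phi> t = 0" by simp
    have "\<phi> = (\<Sum>t\<in>Tn n s. cscale (\<phi> t) (ket t))"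
    proof
      fix u
      have "(\<Sum>t\<in>Tn n s. cscale (\<phi> t) (ket t)) u = (\<Sum>t\<in>Tn n s. if t = u then \<phi> u else 0)"
        by (simp add: fsum_apply cscale_def ket_def) (rule sum.cong, auto)
      also have "\<dots> = \<phi> u" using h finite_Tn by (simp add: sum.delta')
      finally show "\<phi> u = (\<Sum>t\<in>Tn n s. cscale (\<phi> t) (ket t)) u" by simp
    qed
    also have "\<dots> \<in> V.span (ket ` Tn n s)"
      by (intro V.span_sum V.span_scale V.span_base) auto
    finally show "\<phi> \<in> V.span (ket ` Tn n s)" .
  qed
next
  show "V.span (ket ` Tn n s) \<subseteq> {\<psi> :: int list \<Rightarrow> complex. \<forall>t. t \<notin> Tn n s \<longrightarrow> \<psi> t = 0}"
    by (rule V.span_minimal) (auto simp: V.subspace_def ket_def cscale_def)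
qed

lemma ket_indep: "V.independent (ket ` Tn n s)"
proof (rule V.independent_if_scalars_zero)
  show "finite (ket ` Tn n s)" using finite_Tn by simp
  fix f x assume s0: "(\<Sum>x\<in>ket ` Tn n s. cscale (f x) x) = 0" and x: "x \<in> ket ` Tn n s"
  obtain t where t: "t \<in> Tn n s" "x = ket t" using x by auto
  have inj: "inj_on ket (Tn n s)" by (rule inj_onI) (auto simp: ket_def fun_eq_iff split: if_splits)
  have "0 = (\<Sum>x\<in>ket ` Tn n s. cscale (f x) x) t" using s0 by simp
  also have "\<dots> = (\<Sum>t'\<in>Tn n s. f (ket t') * ket t' t)"
    by (simp add: sum.reindex[OF inj] fsum_apply cscale_def)
  also have "\<dots> = (\<Sum>t'\<in>Tn n s. if t' = t then f (ket t) else 0)"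
    by (rule sum.cong) (auto simp: ket_def)
  also have "\<dots> = f x" using t finite_Tn by simp
  finally show "f x = 0" by simp
qed

theorem lemma8:
  fixes s n :: nat and J :: real
  assumes "s \<ge> 1" and "n \<ge> 1" and "J > 0"
  shows "(\<forall>t\<in>Tn n s. equiv_class n s t = {t} \<and> class_state n s t = ket t)
       \<and> ground_space n s J = module.span cscale (ket ` Tn n s)
       \<and> vector_space.dim cscale (ground_space n s J) = card (Tn n s)"
proof (intro conjI)
  show "\<forall>t\<in>Tn n s. equiv_class n s t = {t} \<and> class_state n s t = ket t"
    using class_Tn by blast
  show gs: "ground_space n s J = module.span cscale (ket ` Tn n s)"
    using ground_eq_W[OF assms(1,3)] W_span by simp
  have inj: "inj_on ket (Tn n s)" by (rule inj_onI) (auto simp: ket_def fun_eq_iff split: if_splits)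
  show "vector_space.dim cscale (ground_space n s J) = card (Tn n s)"
    unfolding gs using V.dim_span_eq_card_independent[OF ket_indep] card_image[OF inj] by simp
qed

end
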